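(* Let $a,d,b,k\in\mathbb{P}$ with $\gcd(a,d)=1$, $b\geq 2$ and $a\geq k-1$, and let $$A=\left(a,\ ba+d,\ b^2a+\tfrac{b^2-1}{b-1}d,\ \dots,\ b^ka+\tfrac{b^k-1}{b-1}d\right).$$ Then $$F(A)=\left((b-1)a-b+d+S_{a-1}\right)a-d,\qquad g(A)=\sum_{r=1}^{a-1}S_r+\frac{(a-1)\big((b-1)a+d-1\big)}{2},$$ where $S_r=\sum_{i=1}^k x_i$ for $(x_1,\dots,x_k)$ the greedy presentation of $r$ (in particular $x_k=\lfloor (b-1)r/(b^k-1)\rfloor$).
   Context: $\mathbb{P}$ denotes the positive integers, $\mathbb{N}$ the nonnegative integers. $\langle A\rangle$ is the numerical semigroup of all $\mathbb{N}$-linear combinations of entries of $A$; $F(A)$ is the largest integer not in $\langle A\rangle$ and $g(A)$ is the number of positive integers not in $\langle A\rangle$. Let $B_i=\frac{b^i-1}{b-1}$. The greedy presentation of $r\in\mathbb{N}$ is the tuple $(x_1,\dots,x_k)\in\mathbb{N}^k$ with $\sum_i B_i x_i=r$ obtained by the greedy algorithm (take $x_k$ maximal, then $x_{k-1}$ maximal for the remainder, etc.); equivalently $x_k=\lfloor (b-1)r/(b^k-1)\rfloor$, $x_i\in\{0,\dots,b\}$ for $i\le k-1$, and if $2\le i\le k-1$ and $x_i=b$ then $x_1=\dots=x_{i-1}=0$. *)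

theory Defs
  imports Complex_Main
begin

definition gen_semigroup :: "nat list \<Rightarrow> nat set" where
  "gen_semigroup A = {n. \<exists>c :: nat \<Rightarrow> nat. n = (\<Sum>i<length A. c i * A ! i)}"

definition frobenius :: "nat list \<Rightarrow> int" where
  "frobenius A = (GREATEST z :: int. z \<notin> int ` gen_semigroup A)"

definition genus :: "nat list \<Rightarrow> nat" where
  "genus A = card {n :: nat. 0 < n \<and> n \<notin> gen_semigroup A}"

definition Bnum :: "nat \<Rightarrow> nat \<Rightarrow> nat" where
  "Bnum b i = (b ^ i - 1) div (b - 1)"

text \<open>Greedy presentation of r with respect to B_1, ..., B_k:
  greedy b k r i is the coordinate x_i (for 1 <= i <= k).
  x_k = r div B_k (maximal), then recurse on the remainder.\<close>
fun greedy :: "nat \<Rightarrow> nat \<Rightarrow> nat \<Rightarrow> nat \<Rightarrow> nat" where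
  "greedy b 0 r i = 0"
| "greedy b (Suc k) r i =
     (if i = Suc k then r div Bnum b (Suc k)
      else greedy b k (r mod Bnum b (Suc k)) i)"

definition Ssum :: "nat \<Rightarrow> nat \<Rightarrow> nat \<Rightarrow> nat" where
  "Ssum b k r = (\<Sum>i = 1..k. greedy b k r i)"

definition gens :: "nat \<Rightarrow> nat \<Rightarrow> nat \<Rightarrow> nat \<Rightarrow> nat list" where
  "gens a d b k = map (\<lambda>i. b ^ i * a + Bnum b i * d) [0..<k+1]"

end

theory Submission
  imports Defs
begin

lemma geom_nat: "(b::nat) \<ge> 1 \<Longrightarrow> (b - 1) * (\<Sum>j<i. b^j) + 1 = b^i"
proof (induction i)
  case 0 then show ?case by simp
next
  case (Suc i)
  have "(b - 1) * (\<Sum>j<Suc i. b^j) + 1 = ((b - 1) * (\<Sum>j<i. b^j) + 1) + (b-1)*b^i"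
    by (simp add: algebra_simps)
  also have "\<dots> = b^i + (b-1)*b^i" using Suc by simp
  also have "\<dots> = b * b^i" using Suc.prems by (cases b) auto
  finally show ?case by simp
qed

lemma Bnum_sum: "(b::nat) \<ge> 2 \<Longrightarrow> Bnum b i = (\<Sum>j<i. b^j)"
proof -
  assume b: "b \<ge> 2"
  have "b^i - 1 = (b - 1) * (\<Sum>j<i. b^j)" using geom_nat[of b i] b by simp
  then show ?thesis unfolding Bnum_def using b by simp
qed

lemma Bnum_0: "b \<ge> 2 \<Longrightarrow> Bnum b 0 = 0" by (simp add: Bnum_sum)
lemma Bnum_1: "b \<ge> 2 \<Longrightarrow> Bnum b (Suc 0) = 1" by (simp add: Bnum_sum)
lemma Bnum_Suc: "b \<ge> 2 \<Longrightarrow> Bnum b (Suc i) = b * Bnum b i + 1"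
proof -
  assume b: "b \<ge> 2"
  have "(\<Sum>j<Suc i. b^j) = b^0 + (\<Sum>j<i. b^(Suc j))" by (rule sum.lessThan_Suc_shift)
  also have "\<dots> = b * (\<Sum>j<i. b^j) + 1" by (simp add: sum_distrib_left)
  finally show ?thesis using b by (simp add: Bnum_sum)
qed
lemma Bnum_pos: "b \<ge> 2 \<Longrightarrow> i \<ge> 1 \<Longrightarrow> Bnum b i \<ge> 1"
  by (cases i) (auto simp: Bnum_Suc)
lemma pow_Bnum: "b \<ge> 2 \<Longrightarrow> b^i = (b - 1) * Bnum b i + 1"
  using geom_nat[of b i] by (simp add: Bnum_sum)

lemma Ssum_0k: "Ssum b 0 r = 0" by (simp add: Ssum_def)

lemma greedy_out: "i > k \<Longrightarrow> greedy b k r i = 0"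
  by (induction k arbitrary: r) auto

lemma Ssum_Suc: "Ssum b (Suc k) r = r div Bnum b (Suc k) + Ssum b k (r mod Bnum b (Suc k))"
proof -
  have "Ssum b (Suc k) r = (\<Sum>i = 1..k. greedy b (Suc k) r i) + greedy b (Suc k) r (Suc k)"
    by (simp add: Ssum_def)
  also have "(\<Sum>i = 1..k. greedy b (Suc k) r i) = Ssum b k (r mod Bnum b (Suc k))"
    unfolding Ssum_def by (rule sum.cong) auto
  finally show ?thesis by simp
qed

lemma greedy_rep: "b \<ge> 2 \<Longrightarrow> k \<ge> 1 \<Longrightarrow> (\<Sum>i = 1..k. greedy b k r i * Bnum b i) = r"
proof (induction k arbitrary: r)
  case 0 then show ?case by simp
next
  case (Suc k)
  have "(\<Sum>i = 1..Suc k. greedy b (Suc k) r i * Bnum b i)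
      = (\<Sum>i = 1..k. greedy b (Suc k) r i * Bnum b i) + greedy b (Suc k) r (Suc k) * Bnum b (Suc k)"
    by simp
  also have "(\<Sum>i = 1..k. greedy b (Suc k) r i * Bnum b i) = (\<Sum>i = 1..k. greedy b k (r mod Bnum b (Suc k)) i * Bnum b i)"
    by (rule sum.cong) auto
  also have "greedy b (Suc k) r (Suc k) = r div Bnum b (Suc k)" by simp
  also have "(\<Sum>i = 1..k. greedy b k (r mod Bnum b (Suc k)) i * Bnum b i) = r mod Bnum b (Suc k)"
  proof (cases "k = 0")
    case True then show ?thesis using Suc.prems by (simp add: Bnum_1)
  next
    case False then show ?thesis using Suc by simp
  qed
  finally show ?case by (simp only: mod_div_mult_eq)
qed

lemma Ssum_zero: "Ssum b k 0 = 0"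
  by (induction k) (auto simp: Ssum_Suc Ssum_0k)

lemma Ssum_top: "b \<ge> 2 \<Longrightarrow> Ssum b (Suc m) (x + j * Bnum b (Suc m)) = j + Ssum b (Suc m) x"
proof -
  assume b: "b \<ge> 2"
  have p: "Bnum b (Suc m) > 0" using Bnum_pos[OF b, of "Suc m"] by simp
  show ?thesis unfolding Ssum_Suc using p by simp
qed

lemma Ssum_step: "b \<ge> 2 \<Longrightarrow> Ssum b m y \<le> Ssum b m (Suc y) + (b - 1)"
proof (induction m arbitrary: y)
  case 0 then show ?case by (simp add: Ssum_0k)
next
  case (Suc m)
  define B where "B = Bnum b (Suc m)"
  have Bp: "B > 0" using Bnum_pos[OF Suc.prems, of "Suc m"] by (simp add: B_def)
  show ?case
  proof (cases "Suc (y mod B) = B")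
    case False
    then have "Suc y mod B = Suc (y mod B)" "Suc y div B = y div B"
      by (auto simp: mod_Suc div_Suc)
    then show ?thesis using Suc.IH[OF Suc.prems, of "y mod B"] unfolding Ssum_Suc B_def[symmetric] by simp
  next
    case True
    then have e: "Suc y mod B = 0" "Suc y div B = Suc (y div B)"
      by (auto simp: mod_Suc div_Suc)
    have "Ssum b m (y mod B) \<le> b"
    proof (cases m)
      case 0 then show ?thesis by (simp add: Ssum_0k)
    next
      case (Suc m')
      have "y mod B = 0 + b * Bnum b m" using True Suc.prems by (simp add: B_def Bnum_Suc)
      then show ?thesis using Ssum_top[OF Suc.prems, of m' 0 b] Suc by (simp add: Ssum_zero)
    qed
    then show ?thesis using e Suc.prems unfolding Ssum_Suc B_def[symmetric] by (simp add: Ssum_zero)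
  qed
qed


lemma Ssum_M: "b \<ge> 2 \<Longrightarrow> m \<ge> 1 \<Longrightarrow> Ssum b m x + 1 \<le> Ssum b m (x + Bnum b (Suc m))"
proof -
  assume b: "b \<ge> 2" and m: "m \<ge> 1"
  then obtain m' where m': "m = Suc m'" by (cases m) auto
  have "x + Bnum b (Suc m) = Suc x + b * Bnum b (Suc m')" using b m' by (simp add: Bnum_Suc)
  then have "Ssum b m (x + Bnum b (Suc m)) = b + Ssum b m (Suc x)"
    using Ssum_top[OF b, of m' "Suc x" b] m' by (simp add: mult.commute)
  moreover have "Ssum b m x \<le> Ssum b m (Suc x) + (b - 1)" by (rule Ssum_step[OF b])
  ultimately show ?thesis using b by simp
qed

lemma Ssum_Miter: "b \<ge> 2 \<Longrightarrow> m \<ge> 1 \<Longrightarrow> Ssum b m x + j \<le> Ssum b m (x + j * Bnum b (Suc m))"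
proof (induction j)
  case 0 then show ?case by simp
next
  case (Suc j)
  have "Ssum b m (x + j * Bnum b (Suc m)) + 1 \<le> Ssum b m (x + j * Bnum b (Suc m) + Bnum b (Suc m))"
    by (rule Ssum_M[OF Suc.prems])
  moreover have "x + j * Bnum b (Suc m) + Bnum b (Suc m) = x + Suc j * Bnum b (Suc m)" by simp
  ultimately show ?case using Suc by simp
qed

lemma Ssum_opt: "b \<ge> 2 \<Longrightarrow> Ssum b k (\<Sum>i = 1..k. c i * Bnum b i) \<le> (\<Sum>i = 1..k. c i)"
proof (induction k)
  case 0 then show ?case by (simp add: Ssum_0k)
next
  case (Suc k)
  define R' where "R' = (\<Sum>i = 1..k. c i * Bnum b i)"
  define C where "C = Bnum b (Suc k)"
  define j where "j = c (Suc k)"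
  have Cp: "C > 0" using Bnum_pos[OF Suc.prems, of "Suc k"] by (simp add: C_def)
  have R: "(\<Sum>i = 1..Suc k. c i * Bnum b i) = R' + j * C" by (simp add: R'_def C_def j_def)
  have cs: "(\<Sum>i = 1..Suc k. c i) = (\<Sum>i = 1..k. c i) + j" by (simp add: j_def)
  have IH: "Ssum b k R' \<le> (\<Sum>i = 1..k. c i)" using Suc by (simp add: R'_def)
  show ?case
  proof (cases "k = 0")
    case True
    then have "R' = 0" "C = 1" using Suc.prems by (auto simp: R'_def C_def Bnum_1)
    then show ?thesis unfolding R cs using True by (simp add: Ssum_Suc Ssum_0k)
  next
    case False
    have "Ssum b (Suc k) (R' + j * C) = j + R' div C + Ssum b k (R' mod C)"
      unfolding Ssum_Suc C_def[symmetric] using Cp by simp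
    moreover have "Ssum b k (R' mod C) + R' div C \<le> Ssum b k (R' mod C + R' div C * C)"
      using Ssum_Miter[OF Suc.prems, of k "R' mod C" "R' div C"] False by (simp add: C_def)
    moreover have "R' mod C + R' div C * C = R'" by (rule mod_div_mult_eq)
    ultimately show ?thesis unfolding R cs using IH by simp
  qed
qed

lemma Ssum_le: "b \<ge> 2 \<Longrightarrow> k \<ge> 1 \<Longrightarrow> Ssum b k r \<le> r"
proof -
  assume b: "b \<ge> 2" and k: "k \<ge> 1"
  define c where "c = (\<lambda>i::nat. if i = 1 then r else 0)"
  have "(\<Sum>i = 1..k. c i * Bnum b i) = r" using k b
    by (simp add: c_def sum.delta Bnum_1 if_distrib[of "\<lambda>x. x * _"] cong: if_cong)
  moreover have "(\<Sum>i = 1..k. c i) = r" using k by (simp add: c_def sum.delta)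
  ultimately show ?thesis using Ssum_opt[OF b, of k c] by simp
qed


lemma split0: "{..<Suc k} = insert (0::nat) {1..k}" by auto

lemma sum_gens:
  assumes b: "b \<ge> 2"
  shows "(\<Sum>i<length (gens a d b k). c i * gens a d b k ! i)
     = (c 0 + (b - 1) * (\<Sum>i = 1..k. c i * Bnum b i) + (\<Sum>i = 1..k. c i)) * a
       + (\<Sum>i = 1..k. c i * Bnum b i) * d"
proof -
  have "(\<Sum>i<length (gens a d b k). c i * gens a d b k ! i)
      = (\<Sum>i<Suc k. c i * (b^i * a + Bnum b i * d))"
    unfolding gens_def by (intro sum.cong) (auto simp del: upt_Suc)
  also have "\<dots> = (\<Sum>i<Suc k. c i * b^i) * a + (\<Sum>i<Suc k. c i * Bnum b i) * d"
    by (simp only: distrib_left sum.distrib sum_distrib_right mult.assoc)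
  also have "(\<Sum>i<Suc k. c i * Bnum b i) = (\<Sum>i = 1..k. c i * Bnum b i)"
    unfolding split0 using b by (simp add: Bnum_0)
  also have "(\<Sum>i<Suc k. c i * b^i) = c 0 + (\<Sum>i = 1..k. c i * b^i)"
    unfolding split0 by simp
  also have "(\<Sum>i = 1..k. c i * b^i) = (\<Sum>i = 1..k. (b - 1) * (c i * Bnum b i) + c i)"
    using b by (intro sum.cong) (auto simp: pow_Bnum[OF b] algebra_simps)
  also have "\<dots> = (b - 1) * (\<Sum>i = 1..k. c i * Bnum b i) + (\<Sum>i = 1..k. c i)"
    by (simp add: sum.distrib sum_distrib_left)
  finally show ?thesis by (simp add: add.assoc)
qed

lemma mem_S:
  assumes b: "b \<ge> 2" and k: "k \<ge> 1"
  shows "n \<in> gen_semigroup (gens a d b k) \<longleftrightarrow>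
         (\<exists>m R. n = m * a + R * d \<and> (b - 1) * R + Ssum b k R \<le> m)"
proof
  assume "n \<in> gen_semigroup (gens a d b k)"
  then obtain c where c: "n = (\<Sum>i<length (gens a d b k). c i * gens a d b k ! i)"
    unfolding gen_semigroup_def by blast
  define R where "R = (\<Sum>i = 1..k. c i * Bnum b i)"
  have "Ssum b k R \<le> (\<Sum>i = 1..k. c i)" unfolding R_def by (rule Ssum_opt[OF b])
  then show "\<exists>m R. n = m * a + R * d \<and> (b - 1) * R + Ssum b k R \<le> m"
    using c sum_gens[OF b, where a=a and d=d and k=k and c=c] unfolding R_def[symmetric]
    by (intro exI[of _ "c 0 + (b - 1) * R + (\<Sum>i = 1..k. c i)"] exI[of _ R]) auto
next
  assume "\<exists>m R. n = m * a + R * d \<and> (b - 1) * R + Ssum b k R \<le> m"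
  then obtain m R where n: "n = m * a + R * d" and le: "(b - 1) * R + Ssum b k R \<le> m" by blast
  define c where "c = (\<lambda>i. if i = 0 then m - ((b - 1) * R + Ssum b k R) else greedy b k R i)"
  have r1: "(\<Sum>i = 1..k. c i * Bnum b i) = R"
    using greedy_rep[OF b k, of R] by (simp add: c_def)
  have r2: "(\<Sum>i = 1..k. c i) = Ssum b k R"
    by (simp add: c_def Ssum_def)
  have "n = (\<Sum>i<length (gens a d b k). c i * gens a d b k ! i)"
    unfolding sum_gens[OF b] r1 r2 n using le by (simp add: c_def)
  then show "n \<in> gen_semigroup (gens a d b k)" unfolding gen_semigroup_def by blast
qed


definition wv :: "nat \<Rightarrow> nat \<Rightarrow> nat \<Rightarrow> nat \<Rightarrow> nat \<Rightarrow> nat" where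
  "wv a d b k r = ((b - 1) * r + Ssum b k r) * a + r * d"

context
  fixes a d b k :: nat
  assumes apos: "0 < a" and kpos: "1 \<le> k" and cop: "coprime a d" and b2: "2 \<le> b"
begin

lemma res_unique_le: "r1 \<le> r2 \<Longrightarrow> r2 < a \<Longrightarrow> r1 * d mod a = r2 * d mod a \<Longrightarrow> r1 = r2"
proof -
  assume le: "r1 \<le> r2" and lt: "r2 < a" and eq: "r1 * d mod a = r2 * d mod a"
  have "a dvd r2 * d - r1 * d" using eq le by (subst mod_eq_dvd_iff_nat[symmetric]) auto
  then have "a dvd (r2 - r1) * d" by (simp add: diff_mult_distrib)
  then have "a dvd r2 - r1" using cop by (simp add: coprime_dvd_mult_left_iff)
  moreover have "r2 - r1 < a" using lt by simp
  ultimately have "r2 - r1 = 0" using nat_dvd_not_less[of "r2 - r1" a] by blast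
  then show ?thesis using le by simp
qed

lemma res_unique: "r1 < a \<Longrightarrow> r2 < a \<Longrightarrow> r1 * d mod a = r2 * d mod a \<Longrightarrow> r1 = r2"
proof -
  assume h: "r1 < a" "r2 < a" "r1 * d mod a = r2 * d mod a"
  show "r1 = r2"
  proof (cases "r1 \<le> r2")
    case True then show ?thesis using h res_unique_le by blast
  next
    case False then have "r2 \<le> r1" by simp
    then show ?thesis using h res_unique_le[of r2 r1] by simp
  qed
qed

lemma res_exists: "\<exists>r<a. r * d mod a = n mod a"
proof -
  let ?f = "\<lambda>r. r * d mod a"
  have inj: "inj_on ?f {..<a}"
  proof (rule inj_onI)
    fix x y assume "x \<in> {..<a}" "y \<in> {..<a}" "?f x = ?f y"
    then have "x < a" "y < a" "x * d mod a = y * d mod a" by auto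
    then show "x = y" by (rule res_unique)
  qed
  have sub: "?f ` {..<a} \<subseteq> {..<a}" using apos by auto
  have eq: "?f ` {..<a} = {..<a}" using endo_inj_surj[OF finite_lessThan sub inj] .
  have "n mod a \<in> {..<a}" using apos by simp
  then have "n mod a \<in> ?f ` {..<a}" by (simp only: eq)
  then obtain r where "r \<in> {..<a}" "n mod a = r * d mod a" by blast
  then show ?thesis by auto
qed

lemma w_mod: "wv a d b k r mod a = r * d mod a"
  unfolding wv_def by simp

lemma S_char: "n \<in> gen_semigroup (gens a d b k) \<longleftrightarrow> (\<exists>r<a. \<exists>t. n = wv a d b k r + t * a)"
proof
  assume "n \<in> gen_semigroup (gens a d b k)"
  then obtain m R where n: "n = m * a + R * d" and le: "(b - 1) * R + Ssum b k R \<le> m"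
    using mem_S[OF b2 kpos] by blast
  define r where "r = R mod a"
  define j where "j = R div a"
  have R: "R = r + j * a" by (simp add: r_def j_def)
  have ra: "r < a" using apos by (simp add: r_def)
  have Gr: "Ssum b k r \<le> r" by (rule Ssum_le[OF b2 kpos])
  have key: "(b - 1) * r + Ssum b k r \<le> m + j * d"
  proof (cases "j = 0")
    case True then show ?thesis using le R by simp
  next
    case False
    have "(b - 1) * R \<ge> (b - 1) * r + (b - 1) * (j * a)" using R by (simp add: algebra_simps)
    moreover have "(b - 1) * (j * a) \<ge> j * a"
    proof -
      have "1 \<le> b - 1" using b2 by linarith
      from mult_le_mono1[OF this, of "j*a"] show ?thesis by simp
    qed
    moreover have "j * a \<ge> a" using False by simp
    ultimately have "(b - 1) * R \<ge> (b - 1) * r + a" by linarith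
    then show ?thesis using le Gr ra by linarith
  qed
  then obtain t where t: "m + j * d = (b - 1) * r + Ssum b k r + t" using le_Suc_ex by blast
  have "n = wv a d b k r + t * a"
  proof -
    have "n = (m + j * d) * a + r * d" unfolding n R by (simp add: algebra_simps)
    also have "\<dots> = wv a d b k r + t * a" unfolding t wv_def by (simp add: algebra_simps)
    finally show ?thesis .
  qed
  then show "\<exists>r<a. \<exists>t. n = wv a d b k r + t * a" using ra by blast
next
  assume "\<exists>r<a. \<exists>t. n = wv a d b k r + t * a"
  then obtain r t where "n = wv a d b k r + t * a" by blast
  then have "n = ((b - 1) * r + Ssum b k r + t) * a + r * d" unfolding wv_def by (simp add: algebra_simps)
  then show "n \<in> gen_semigroup (gens a d b k)" using mem_S[OF b2 kpos]
    by (intro iffD2[OF mem_S[OF b2 kpos]]) (intro exI[of _ "(b - 1) * r + Ssum b k r + t"] exI[of _ r], simp)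
qed

lemma key:
  assumes r: "r < a" and rn: "r * d mod a = n mod a"
  shows "n \<in> gen_semigroup (gens a d b k) \<longleftrightarrow> wv a d b k r \<le> n"
proof
  assume "n \<in> gen_semigroup (gens a d b k)"
  then have "\<exists>r<a. \<exists>t. n = wv a d b k r + t * a" by (simp only: S_char)
  then obtain r' t where r': "r' < a" and n: "n = wv a d b k r' + t * a" by blast
  have "r' * d mod a = n mod a" unfolding n w_mod[symmetric] by simp
  then have "r' * d mod a = r * d mod a" using rn by simp
  then have "r' = r" by (rule res_unique[OF r' r])
  then show "wv a d b k r \<le> n" using n by simp
next
  assume le: "wv a d b k r \<le> n"
  have "n mod a = wv a d b k r mod a" using rn w_mod by simp
  then have "a dvd n - wv a d b k r" using mod_eq_dvd_iff_nat[OF le] by simp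
  then obtain t where t: "n - wv a d b k r = a * t" by blast
  have "n = wv a d b k r + (n - wv a d b k r)" using le by simp
  then have "n = wv a d b k r + t * a" unfolding t by (simp add: mult.commute)
  then have "\<exists>r<a. \<exists>t. n = wv a d b k r + t * a" using r by blast
  then show "n \<in> gen_semigroup (gens a d b k)" by (simp only: S_char)
qed

lemma w_step: "wv a d b k n \<le> wv a d b k (Suc n)"
proof -
  have h: "Ssum b k n \<le> Ssum b k (Suc n) + (b - 1)" by (rule Ssum_step[OF b2])
  have "(b - 1) * Suc n = (b - 1) * n + (b - 1)" by simp
  then have "(b - 1) * n + Ssum b k n \<le> (b - 1) * Suc n + Ssum b k (Suc n)" using h by linarith
  then have "((b - 1) * n + Ssum b k n) * a \<le> ((b - 1) * Suc n + Ssum b k (Suc n)) * a"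
    by (rule mult_right_mono) simp
  moreover have "n * d \<le> Suc n * d" by simp
  ultimately show ?thesis unfolding wv_def by (rule add_mono)
qed

lemma w_mono: "r \<le> r' \<Longrightarrow> wv a d b k r \<le> wv a d b k r'"
  by (rule lift_Suc_mono_le[of "wv a d b k", OF w_step])


lemma pair_floor:
  assumes r1: "1 \<le> r" and ra: "r < a"
  shows "r * d div a + (a - r) * d div a = d - 1"
proof -
  define q where "q = r * d div a"
  define s where "s = r * d mod a"
  have rd: "r * d = q * a + s" by (simp add: q_def s_def)
  have sa: "s < a" using apos by (simp add: s_def)
  have s0: "s \<noteq> 0"
  proof
    assume "s = 0"
    then have "a dvd r * d" by (simp add: s_def mod_eq_0_iff_dvd)
    then have "a dvd r" using cop by (simp add: coprime_dvd_mult_left_iff)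
    then show False using r1 ra nat_dvd_not_less[of r a] by simp
  qed
  have dpos: "d > 0"
  proof (rule ccontr)
    assume "\<not> d > 0" then have "d = 0" by simp
    then have "a = 1" using cop by simp
    then show False using r1 ra by simp
  qed
  have "r * d < a * d" using ra dpos by simp
  then have "q * a < a * d" using rd by linarith
  then have qd: "q < d" using apos by (simp add: mult.commute)
  have "(a - r) * d = (d - q - 1) * a + (a - s)"
  proof -
    have "(a - r) * d = a * d - r * d" by (simp add: diff_mult_distrib)
    also have "\<dots> = a * d - (q * a + s)" using rd by simp
    also have "\<dots> = (d - q - 1) * a + (a - s)"
    proof -
      have dd: "d = (d - q - 1) + q + 1" using qd by simp
      have "a * d = a * ((d - q - 1) + q + 1)" by (subst dd) (rule refl)
      then have "a * d = (d - q - 1) * a + q * a + a" by (simp add: algebra_simps)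
      then show ?thesis using sa by simp
    qed
    finally show ?thesis .
  qed
  moreover have "((d - q - 1) * a + (a - s)) div a = d - q - 1"
  proof -
    have "(a - s) div a = 0" using sa s0 by simp
    then show ?thesis using apos by (simp only: div_mult_self3 add.commute[of "(d - q - 1) * a"]) simp
  qed
  ultimately have "(a - r) * d div a = d - q - 1" by simp
  then show ?thesis using qd by (simp add: q_def[symmetric])
qed

lemma floor_sum: "2 * (\<Sum>r<a. r * d div a) = (a - 1) * (d - 1)"
proof -
  let ?f = "\<lambda>r. r * d div a"
  have "(\<Sum>r<a. ?f r) = (\<Sum>r\<in>{1..<a}. ?f r)"
  proof -
    have "{..<a} = insert 0 {1..<a}" using apos by auto
    then show ?thesis by simp
  qed
  moreover have "(\<Sum>r\<in>{1..<a}. ?f r) = (\<Sum>r\<in>{1..<a}. ?f (a - r))"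
    using sum.atLeastLessThan_rev[of ?f 1 a] by simp
  ultimately have "2 * (\<Sum>r<a. ?f r) = (\<Sum>r\<in>{1..<a}. ?f r + ?f (a - r))"
    by (simp add: sum.distrib)
  also have "\<dots> = (\<Sum>r\<in>{1..<a}. d - 1)"
  proof (rule sum.cong)
    fix x assume "x \<in> {1..<a}"
    then have "1 \<le> x" "x < a" by auto
    then show "?f x + ?f (a - x) = d - 1" by (rule pair_floor)
  qed simp
  also have "\<dots> = (a - 1) * (d - 1)" by simp
  finally show ?thesis .
qed


lemma sub_mod: "t * a \<le> wv a d b k r \<Longrightarrow> (wv a d b k r - t * a) mod a = r * d mod a"
proof -
  assume le: "t * a \<le> wv a d b k r"
  have "wv a d b k r = (wv a d b k r - t * a) + t * a" using le by simp
  then have "wv a d b k r mod a = (wv a d b k r - t * a) mod a" by (metis mod_mult_self1)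
  then show ?thesis using w_mod by simp
qed

lemma w0: "wv a d b k 0 = 0" by (simp add: wv_def Ssum_zero)

lemma gaps_eq: "{n. 0 < n \<and> n \<notin> gen_semigroup (gens a d b k)}
   = (\<lambda>(r, t). wv a d b k r - t * a) ` (SIGMA r:{..<a}. {1..wv a d b k r div a})"
proof (intro equalityI subsetI)
  fix n assume "n \<in> {n. 0 < n \<and> n \<notin> gen_semigroup (gens a d b k)}"
  then have n0: "0 < n" and nS: "n \<notin> gen_semigroup (gens a d b k)" by auto
  obtain r where r: "r < a" and rn: "r * d mod a = n mod a" using res_exists by blast
  have lt: "n < wv a d b k r" using key[OF r rn] nS by simp
  have "wv a d b k r mod a = n mod a" using w_mod rn by simp
  then have "a dvd wv a d b k r - n" using mod_eq_dvd_iff_nat[of n "wv a d b k r"] lt by simp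
  then obtain t where t: "wv a d b k r - n = a * t" by blast
  have t1: "1 \<le> t" using t lt by (cases t) auto
  have "t * a \<le> wv a d b k r" using t by (simp add: mult.commute)
  then have t2: "t \<le> wv a d b k r div a" using apos by (simp add: less_eq_div_iff_mult_less_eq)
  have "n = wv a d b k r - t * a" using t lt by (simp add: mult.commute)
  then show "n \<in> (\<lambda>(r, t). wv a d b k r - t * a) ` (SIGMA r:{..<a}. {1..wv a d b k r div a})"
    using r t1 t2 by (intro image_eqI[of _ _ "(r, t)"]) auto
next
  fix n assume "n \<in> (\<lambda>(r, t). wv a d b k r - t * a) ` (SIGMA r:{..<a}. {1..wv a d b k r div a})"
  then obtain r t where r: "r < a" and t1: "1 \<le> t" and t2: "t \<le> wv a d b k r div a"
    and n: "n = wv a d b k r - t * a" by auto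
  have r0: "r \<noteq> 0" using t1 t2 w0 by (cases r) auto
  have ta: "t * a \<le> wv a d b k r" using t2 apos by (simp add: less_eq_div_iff_mult_less_eq)
  have nm: "r * d mod a = n mod a" using sub_mod[OF ta] n by simp
  have "n \<noteq> 0"
  proof
    assume "n = 0"
    then have "r * d mod a = 0 * d mod a" using nm by simp
    then have "r = 0" using res_unique[OF r apos] by simp
    then show False using r0 by simp
  qed
  moreover have "n < wv a d b k r" using n t1 apos ta
    by (metis diff_less le_trans less_one mult_pos_pos not_le nat_less_le)
  then have "n \<notin> gen_semigroup (gens a d b k)" using key[OF r nm] by simp
  ultimately show "n \<in> {n. 0 < n \<and> n \<notin> gen_semigroup (gens a d b k)}" by simp
qed

lemma gaps_inj_aux:
  assumes r1: "r1 < a" and t1: "t1 \<le> wv a d b k r1 div a"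
    and r2: "r2 < a" and t2: "t2 \<le> wv a d b k r2 div a"
    and eq: "wv a d b k r1 - t1 * a = wv a d b k r2 - t2 * a"
  shows "r1 = r2 \<and> t1 = t2"
proof -
  have ta1: "t1 * a \<le> wv a d b k r1" using t1 apos by (simp add: less_eq_div_iff_mult_less_eq)
  have ta2: "t2 * a \<le> wv a d b k r2" using t2 apos by (simp add: less_eq_div_iff_mult_less_eq)
  have "r1 * d mod a = r2 * d mod a" using sub_mod[OF ta1] sub_mod[OF ta2] eq by simp
  then have rr: "r1 = r2" by (rule res_unique[OF r1 r2])
  have eq2: "wv a d b k r1 - t1 * a = wv a d b k r1 - t2 * a" using eq rr by simp
  have ta2': "t2 * a \<le> wv a d b k r1" using ta2 rr by simp
  have "t1 * a = t2 * a" using eq2 ta1 ta2' by linarith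
  then show ?thesis using rr apos by simp
qed

lemma gaps_inj: "inj_on (\<lambda>(r, t). wv a d b k r - t * a) (SIGMA r:{..<a}. {1..wv a d b k r div a})"
  by (rule inj_onI) (auto dest: gaps_inj_aux)

lemma genus_sum: "genus (gens a d b k) = (\<Sum>r<a. wv a d b k r div a)"
proof -
  have "genus (gens a d b k) = card (SIGMA r:{..<a}. {1..wv a d b k r div a})"
    unfolding genus_def gaps_eq by (rule card_image[OF gaps_inj])
  also have "\<dots> = (\<Sum>r<a. wv a d b k r div a)" by simp
  finally show ?thesis .
qed


lemma frob: "frobenius (gens a d b k) = int (wv a d b k (a - 1)) - int a"
  unfolding frobenius_def
proof (rule Greatest_equality)
  let ?W = "wv a d b k (a - 1)"
  have am: "a - 1 < a" using apos by simp
  show "int ?W - int a \<notin> int ` gen_semigroup (gens a d b k)"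
  proof
    assume "int ?W - int a \<in> int ` gen_semigroup (gens a d b k)"
    then obtain n where n: "int ?W - int a = int n" and nS: "n \<in> gen_semigroup (gens a d b k)" by auto
    have Wn: "?W = n + a" using n by linarith
    have "n mod a = ?W mod a" using Wn by simp
    then have "(a - 1) * d mod a = n mod a" using w_mod by simp
    then have "?W \<le> n" using key[OF am] nS by blast
    then show False using Wn apos by simp
  qed
next
  let ?W = "wv a d b k (a - 1)"
  have am: "a - 1 < a" using apos by simp
  fix y assume yS: "y \<notin> int ` gen_semigroup (gens a d b k)"
  show "y \<le> int ?W - int a"
  proof (rule ccontr)
    assume "\<not> y \<le> int ?W - int a"
    then have gt: "y > int ?W - int a" by simp
    have "?W \<ge> (a - 1) * d" unfolding wv_def by simp
    moreover have "(a - 1) * d \<ge> a - 1"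
    proof (cases "d = 0")
      case True then have "a = 1" using cop by simp
      then show ?thesis by simp
    next
      case False then show ?thesis by simp
    qed
    ultimately have "y \<ge> 0" using gt by linarith
    then obtain n where yn: "y = int n" by (metis nonneg_eq_int)
    then have nS: "n \<notin> gen_semigroup (gens a d b k)" using yS by auto
    obtain r where r: "r < a" and rn: "r * d mod a = n mod a" using res_exists by blast
    have lt: "n < wv a d b k r" using key[OF r rn] nS by simp
    have "wv a d b k r mod a = n mod a" using w_mod rn by simp
    then have "a dvd wv a d b k r - n" using mod_eq_dvd_iff_nat[of n "wv a d b k r"] lt by simp
    then obtain t where t: "wv a d b k r - n = a * t" by blast
    have "t \<noteq> 0" using t lt by (cases t) auto
    then have "a * t \<ge> a" by simp
    then have "n + a \<le> wv a d b k r" using t lt by linarith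
    moreover have "wv a d b k r \<le> ?W" using r by (intro w_mono) simp
    ultimately have "int n \<le> int ?W - int a" by linarith
    then show False using gt yn by simp
  qed
qed

end

theorem theorem3p5:
  fixes a d b k :: nat
  assumes "0 < a" and "0 < d" and "0 < k"
    and "gcd a d = 1" and "2 \<le> b" and "k - 1 \<le> a"
  shows "frobenius (gens a d b k)
           = ((int b - 1) * int a - int b + int d + int (Ssum b k (a - 1))) * int a - int d
         \<and> real (genus (gens a d b k))
           = real (\<Sum>r = 1..a - 1. Ssum b k r)
             + real (a - 1) * ((real b - 1) * real a + real d - 1) / 2"
proof
  have apos: "0 < a" and kpos: "1 \<le> k" and cop: "coprime a d" and b2: "2 \<le> b"
    using assms by (auto simp: coprime_iff_gcd_eq_1)
  show "frobenius (gens a d b k)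
           = ((int b - 1) * int a - int b + int d + int (Ssum b k (a - 1))) * int a - int d"
  proof -
    have "frobenius (gens a d b k) = int (wv a d b k (a - 1)) - int a" by (rule frob[OF apos kpos cop b2])
    also have "int (wv a d b k (a - 1))
       = ((int b - 1) * (int a - 1) + int (Ssum b k (a - 1))) * int a + (int a - 1) * int d"
      unfolding wv_def using apos b2 by (simp add: of_nat_diff)
    finally show ?thesis by (simp add: algebra_simps)
  qed
  show "real (genus (gens a d b k))
           = real (\<Sum>r = 1..a - 1. Ssum b k r)
             + real (a - 1) * ((real b - 1) * real a + real d - 1) / 2"
  proof -
    let ?G = "\<lambda>r. Ssum b k r"
    have g: "genus (gens a d b k) = (\<Sum>r<a. wv a d b k r div a)" by (rule genus_sum[OF apos kpos cop b2])
    have "(\<Sum>r<a. wv a d b k r div a) = (\<Sum>r<a. (b - 1) * r + ?G r + r * d div a)"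
      by (rule sum.cong) (auto simp: wv_def apos)
    also have "\<dots> = (b - 1) * (\<Sum>r<a. r) + (\<Sum>r<a. ?G r) + (\<Sum>r<a. r * d div a)"
      by (simp add: sum.distrib sum_distrib_left)
    finally have g2: "genus (gens a d b k) = (b - 1) * (\<Sum>r<a. r) + (\<Sum>r<a. ?G r) + (\<Sum>r<a. r * d div a)"
      using g by simp
    have fs: "2 * (\<Sum>r<a. r * d div a) = (a - 1) * (d - 1)" by (rule floor_sum[OF apos kpos cop b2])
    have gs: "2 * (\<Sum>r<a. r) = a * (a - 1)"
    proof (induction a)
      case 0 then show ?case by simp
    next
      case (Suc n) then show ?case by (cases n) (auto simp: algebra_simps)
    qed
    have Gs: "(\<Sum>r<a. ?G r) = (\<Sum>r = 1..a - 1. ?G r)"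
    proof -
      have "{..<a} = insert 0 {1..a - 1}" using apos by auto
      then show ?thesis by (simp add: Ssum_zero)
    qed
    have "2 * genus (gens a d b k) = (b - 1) * (2 * (\<Sum>r<a. r)) + 2 * (\<Sum>r<a. ?G r) + 2 * (\<Sum>r<a. r * d div a)"
      unfolding g2 by (simp only: distrib_left mult.left_commute[of 2])
    also have "\<dots> = (b - 1) * (a * (a - 1)) + 2 * (\<Sum>r = 1..a - 1. ?G r) + (a - 1) * (d - 1)"
      by (simp only: fs gs Gs)
    finally have "2 * genus (gens a d b k) = (b - 1) * (a * (a - 1)) + 2 * (\<Sum>r = 1..a - 1. ?G r) + (a - 1) * (d - 1)" .
    then have "2 * real (genus (gens a d b k)) = real ((b - 1) * (a * (a - 1)) + 2 * (\<Sum>r = 1..a - 1. ?G r) + (a - 1) * (d - 1))"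
      by (metis of_nat_mult of_nat_numeral)
    also have "\<dots> = (real b - 1) * (real a * (real a - 1)) + 2 * real (\<Sum>r = 1..a - 1. ?G r) + (real a - 1) * (real d - 1)"
      using apos b2 assms(2) by (simp add: of_nat_diff)
    finally show ?thesis using apos by (simp add: of_nat_diff field_simps)
  qed
qed

end
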